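(* Let $\mathcal H$ be a well-structured preconditioner set. For every $x\in\mathbb R^d$, $\|x\|_{\mathcal H,*}=\operatorname{Tr}[P_{\mathcal H}(xx^\top)]$.
   Context: $\mathcal S^d_+$ (resp. $\mathcal S^d_{++}$) denotes the set of real symmetric positive semidefinite (resp. positive definite) $d\times d$ matrices; $\langle A,B\rangle=\operatorname{Tr}(A^\top B)$. A set $\mathcal H\subseteq\mathcal S_+^d$ is a well-structured preconditioner set if $\mathcal H=\mathcal S_+^d\cap\mathcal K$ for some set $\mathcal K$ of real $d\times d$ matrices that is closed under scalar multiplication, matrix addition and matrix multiplication and contains the identity $I_d$. For $M\in\mathcal S^d_{++}$, $P_{\mathcal H}(M):=\arg\min_{H\in\mathcal H\cap\mathcal S^d_{++}}\langle M,H^{-1}\rangle+\operatorname{Tr}(H)$ (the minimizer exists and is unique); for singular $M\in\mathcal S^d_+$, $P_{\mathcal H}(M):=\lim_{\delta\downarrow0}P_{\mathcal H}(M+\delta I_d)$. For $H\in\mathcal S_+^d$, $\|x\|_H=\sqrt{x^\top Hx}$; $\|x\|_{\mathcal H}:=\sup_{H\in\mathcal H,\operatorname{Tr}(H)\le1}\|x\|_H$ and $\|y\|_{\mathcal H,*}:=\sup_{\|x\|_{\mathcal H}\le1}\langle x,y\rangle$. *)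

theory Defs
  imports "HOL-Analysis.Analysis"
begin

type_synonym 'n sqmat = "real^'n^'n"

definition frob_inner :: "'n::finite sqmat \<Rightarrow> 'n sqmat \<Rightarrow> real" where
  "frob_inner A B = trace (transpose A ** B)"

definition psd_set :: "'n::finite sqmat set" where
  "psd_set = {A. transpose A = A \<and> (\<forall>v. 0 \<le> v \<bullet> (A *v v))}"

definition pd_set :: "'n::finite sqmat set" where
  "pd_set = {A. transpose A = A \<and> (\<forall>v. v \<noteq> 0 \<longrightarrow> 0 < v \<bullet> (A *v v))}"

definition well_structured :: "'n::finite sqmat set \<Rightarrow> bool" where
  "well_structured \<H> \<longleftrightarrow> (\<exists>K :: 'n sqmat set.
      (\<forall>c A. A \<in> K \<longrightarrow> c *\<^sub>R A \<in> K) \<and>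
      (\<forall>A B. A \<in> K \<longrightarrow> B \<in> K \<longrightarrow> A + B \<in> K) \<and>
      (\<forall>A B. A \<in> K \<longrightarrow> B \<in> K \<longrightarrow> A ** B \<in> K) \<and>
      mat 1 \<in> K \<and>
      \<H> = psd_set \<inter> K)"

definition precond_obj :: "'n::finite sqmat \<Rightarrow> 'n sqmat \<Rightarrow> real" where
  "precond_obj M H = frob_inner M (matrix_inv H) + trace H"

definition P_pd :: "'n::finite sqmat set \<Rightarrow> 'n sqmat \<Rightarrow> 'n sqmat" where
  "P_pd \<H> M = (THE H. H \<in> \<H> \<inter> pd_set \<and>
      (\<forall>H' \<in> \<H> \<inter> pd_set. precond_obj M H \<le> precond_obj M H'))"

definition P_H :: "'n::finite sqmat set \<Rightarrow> 'n sqmat \<Rightarrow> 'n sqmat" where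
  "P_H \<H> M = (if M \<in> pd_set then P_pd \<H> M
     else Lim (at_right 0) (\<lambda>\<delta>::real. P_pd \<H> (M + \<delta> *\<^sub>R mat 1)))"

definition H_norm :: "'n::finite sqmat set \<Rightarrow> real^'n \<Rightarrow> real" where
  "H_norm \<H> x = Sup {sqrt (x \<bullet> (H *v x)) | H. H \<in> \<H> \<and> trace H \<le> 1}"

definition H_dual_norm :: "'n::finite sqmat set \<Rightarrow> real^'n \<Rightarrow> real" where
  "H_dual_norm \<H> y = Sup {x \<bullet> y | x. H_norm \<H> x \<le> 1}"

definition outer :: "real^'n \<Rightarrow> real^'n \<Rightarrow> real^'n^'n" where
  "outer x y = (\<chi> i j. x $ i * y $ j)"

end

theory Submission
  imports Defs
begin

lemma outer_mulv: "outer a b *v v = (b \<bullet> v) *\<^sub>R a"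
  by (simp add: outer_def matrix_vector_mult_def inner_vec_def vec_eq_iff sum_distrib_left mult_ac)
lemma transpose_outer: "transpose (outer a b) = outer b a"
  by (simp add: outer_def transpose_def vec_eq_iff mult.commute)
lemma trace_outer: "trace (outer a b) = a \<bullet> b"
  by (simp add: outer_def trace_def inner_vec_def)
lemma sum_mulv: "(\<Sum>i\<in>S. F i) *v v = (\<Sum>i\<in>S. F i *v (v::real^'n))"
proof (induction S rule: infinite_finite_induct)
  case (insert x F) thus ?case by (simp add: matrix_vector_mult_add_rdistrib)
qed (auto simp: matrix_vector_mult_def vec_eq_iff)
lemma mulv_sum: "(X::real^'n^'m) *v (\<Sum>i\<in>S. f i) = (\<Sum>i\<in>S. X *v f i)"
  using linear_sum[OF matrix_vector_mul_linear[of X]] by simp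
lemma trace_sum: "trace (\<Sum>i\<in>S. F i) = (\<Sum>i\<in>S. trace (F i :: real^'n^'n))"
proof (induction S rule: infinite_finite_induct)
  case (insert x F) thus ?case by (simp add: trace_add)
qed (auto simp: trace_def)
lemma transpose_sum: "transpose (\<Sum>i\<in>S. F i) = (\<Sum>i\<in>S. transpose (F i :: real^'n^'m))"
proof (induction S rule: infinite_finite_induct)
  case (insert x F) thus ?case by (simp add: transpose_def vec_eq_iff)
qed (auto simp: transpose_def vec_eq_iff)

definition onb :: "(real^'n) set \<Rightarrow> bool" where
  "onb B \<longleftrightarrow> finite B \<and> (\<forall>b\<in>B. norm b = 1) \<and> (\<forall>b\<in>B. \<forall>c\<in>B. b \<noteq> c \<longrightarrow> b \<bullet> c = 0)
     \<and> (\<forall>v. v = (\<Sum>b\<in>B. (b \<bullet> v) *\<^sub>R b))"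

definition mk :: "(real^'n) set \<Rightarrow> (real^'n \<Rightarrow> real) \<Rightarrow> real^'n^'n" where
  "mk B h = (\<Sum>b\<in>B. h b *\<^sub>R outer b b)"

lemma onb_inner_self: "onb B \<Longrightarrow> b \<in> B \<Longrightarrow> b \<bullet> b = 1"
  unfolding onb_def by (metis norm_eq_sqrt_inner real_sqrt_eq_1_iff)

lemma onb_sum_delta: assumes "onb B" "b \<in> B"
  shows "(\<Sum>c\<in>B. f c * (c \<bullet> b)) = f b"
proof -
  have "(\<Sum>c\<in>B. f c * (c \<bullet> b)) = (\<Sum>c\<in>B. if c = b then f b else 0)"
    using assms onb_inner_self[OF assms] unfolding onb_def
    by (intro sum.cong) auto
  also have "\<dots> = f b" using assms unfolding onb_def by simp
  finally show ?thesis .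
qed

lemma onb_sum_delta_vec: assumes "onb B" "b \<in> B"
  shows "(\<Sum>c\<in>B. (f c * (c \<bullet> b)) *\<^sub>R c) = f b *\<^sub>R b"
proof -
  have "(\<Sum>c\<in>B. (f c * (c \<bullet> b)) *\<^sub>R c) = (\<Sum>c\<in>B. if c = b then f b *\<^sub>R b else 0)"
    using assms onb_inner_self[OF assms] unfolding onb_def
    by (intro sum.cong) auto
  also have "\<dots> = f b *\<^sub>R b" using assms unfolding onb_def by simp
  finally show ?thesis .
qed

lemma onb_expand: "onb B \<Longrightarrow> v = (\<Sum>b\<in>B. (b \<bullet> v) *\<^sub>R b)"
  unfolding onb_def by blast

lemma onb_eqI: assumes "onb B" "\<And>b. b \<in> B \<Longrightarrow> X *v b = Y *v b" shows "X = Y"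
proof -
  have "X *v v = Y *v v" for v
  proof -
    have "X *v v = X *v (\<Sum>b\<in>B. (b \<bullet> v) *\<^sub>R b)" using onb_expand[OF assms(1)] by metis
    also have "\<dots> = (\<Sum>b\<in>B. (b \<bullet> v) *\<^sub>R (X *v b))" by (simp add: mulv_sum matrix_vector_mult_scaleR)
    also have "\<dots> = (\<Sum>b\<in>B. (b \<bullet> v) *\<^sub>R (Y *v b))" using assms(2) by simp
    also have "\<dots> = Y *v (\<Sum>b\<in>B. (b \<bullet> v) *\<^sub>R b)" by (simp add: mulv_sum matrix_vector_mult_scaleR)
    finally show ?thesis using onb_expand[OF assms(1)] by metis
  qed
  thus ?thesis by (simp add: matrix_eq)
qed

lemma mk_mulv: "mk B h *v v = (\<Sum>b\<in>B. (h b * (b \<bullet> v)) *\<^sub>R b)"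
  unfolding mk_def sum_mulv by (simp add: scaleR_matrix_vector_assoc[symmetric] outer_mulv)

lemma mk_mulv_basis: "onb B \<Longrightarrow> b \<in> B \<Longrightarrow> mk B h *v b = h b *\<^sub>R b"
  unfolding mk_mulv by (rule onb_sum_delta_vec)

lemma mk_quad: "v \<bullet> (mk B h *v v) = (\<Sum>b\<in>B. h b * (b \<bullet> v)\<^sup>2)"
  unfolding mk_mulv by (simp add: inner_sum_right power2_eq_square inner_commute mult_ac)

lemma transpose_mk: "transpose (mk B h) = mk B h"
  unfolding mk_def transpose_sum by (simp add: transpose_scalar transpose_outer)

lemma trace_mk: "onb B \<Longrightarrow> trace (mk B h) = (\<Sum>b\<in>B. h b)"
  unfolding mk_def trace_sum by (simp add: trace_def trace_outer[unfolded trace_def] sum_distrib_left[symmetric] onb_inner_self)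

lemma mk_mult: "onb B \<Longrightarrow> mk B h ** mk B g = mk B (\<lambda>b. h b * g b)"
  by (rule onb_eqI, assumption) (simp add: matrix_vector_mul_assoc[symmetric] mk_mulv_basis matrix_vector_mult_scaleR)

lemma mk_one: "onb B \<Longrightarrow> mk B (\<lambda>_. 1) = mat 1"
  by (rule onb_eqI, assumption) (simp add: mk_mulv_basis)

lemma mk_add: "onb B \<Longrightarrow> mk B (\<lambda>b. h b + c * g b) = mk B h + c *\<^sub>R mk B g"
  by (rule onb_eqI, assumption) (simp add: mk_mulv_basis matrix_vector_mult_add_rdistrib scaleR_matrix_vector_assoc[symmetric] algebra_simps)

lemma trace_onb: assumes "onb B" shows "trace X = (\<Sum>b\<in>B. b \<bullet> (X *v b))"
proof -
  have "X = (\<Sum>b\<in>B. outer (X *v b) b)"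
  proof (rule onb_eqI[OF assms])
    fix b assume "b \<in> B"
    have "X *v b = X *v (\<Sum>c\<in>B. (c \<bullet> b) *\<^sub>R c)" using onb_expand[OF assms] by metis
    also have "\<dots> = (\<Sum>c\<in>B. (c \<bullet> b) *\<^sub>R (X *v c))" by (simp add: mulv_sum matrix_vector_mult_scaleR)
    finally show "X *v b = (\<Sum>c\<in>B. outer (X *v c) c) *v b" by (simp add: sum_mulv outer_mulv)
  qed
  hence "trace X = (\<Sum>b\<in>B. trace (outer (X *v b) b))" by (metis trace_sum)
  thus ?thesis by (simp add: trace_outer inner_commute)
qed

lemma onb_inner: "onb B \<Longrightarrow> u \<bullet> v = (\<Sum>b\<in>B. (b \<bullet> u) * (b \<bullet> v))"
  by (subst onb_expand[of B u], assumption) (simp add: inner_sum_left)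

lemma sym_inner: "transpose A = A \<Longrightarrow> u \<bullet> (A *v v) = (A *v u) \<bullet> (v::real^'n)"
  by (metis dot_lmul_matrix inner_commute transpose_matrix_vector)

lemma small_coeff_zero:
  fixes a d :: real assumes "\<And>t. 2 * t * a \<le> t\<^sup>2 * d" shows "a = 0"
proof (rule ccontr)
  assume "a \<noteq> 0"
  define p where "p = \<bar>d\<bar> + 1"
  define t where "t = a / p"
  have pos: "p > 0" unfolding p_def by simp
  have h: "2 * t * a \<le> t\<^sup>2 * d" by (rule assms)
  have "(2 * t * a) * p\<^sup>2 \<le> (t\<^sup>2 * d) * p\<^sup>2" by (rule mult_right_mono[OF h]) simp
  moreover have "(2 * t * a) * p\<^sup>2 = (a * a) * (2 * p)" unfolding t_def using pos by (simp add: power2_eq_square)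
  moreover have "(t\<^sup>2 * d) * p\<^sup>2 = (a * a) * d" unfolding t_def using pos by (simp add: power2_eq_square)
  ultimately have 1: "(a * a) * (2 * p) \<le> (a * a) * d" by simp
  have "a * a > 0" using \<open>a \<noteq> 0\<close> not_real_square_gt_zero by blast
  moreover have "d < 2 * p" unfolding p_def by simp
  ultimately have "(a * a) * d < (a * a) * (2 * p)" by (rule mult_strict_left_mono[rotated])
  with 1 show False by simp
qed

lemma spectral_sub:
  fixes A :: "real^'n^'n"
  assumes sym: "transpose A = A"
  shows "subspace V \<Longrightarrow> (\<forall>v\<in>V. A *v v \<in> V) \<Longrightarrow>
    \<exists>B. finite B \<and> B \<subseteq> V \<and> (\<forall>b\<in>B. norm b = 1) \<and> (\<forall>b\<in>B. \<forall>c\<in>B. b \<noteq> c \<longrightarrow> b \<bullet> c = 0)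
      \<and> span B = V \<and> (\<forall>b\<in>B. \<exists>\<mu>. A *v b = \<mu> *\<^sub>R b)"
proof (induction "dim V" arbitrary: V rule: less_induct)
  case less
  show ?case
  proof (cases "V = {0}")
    case True
    then show ?thesis by (intro exI[of _ "{}"]) auto
  next
    case False
    then obtain v0 where v0: "v0 \<in> V" "v0 \<noteq> 0" using less.prems(1) subspace_0 by blast
    define S where "S = V \<inter> sphere 0 1"
    have "compact S" unfolding S_def
      by (rule closed_Int_compact[OF closed_subspace[OF less.prems(1)] compact_sphere])
    moreover have "S \<noteq> {}"
    proof -
      have "(1 / norm v0) *\<^sub>R v0 \<in> S" unfolding S_def using v0 less.prems(1)
        by (simp add: subspace_scale)
      thus ?thesis by blast
    qed
    moreover have "continuous_on S (\<lambda>v. v \<bullet> (A *v v))"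
      by (rule continuous_on_inner[OF continuous_on_id matrix_vector_mult_linear_continuous_on])
    ultimately obtain u where u: "u \<in> S" and umax: "\<And>y. y \<in> S \<Longrightarrow> y \<bullet> (A *v y) \<le> u \<bullet> (A *v u)"
      using continuous_attains_sup[of S "\<lambda>v. v \<bullet> (A *v v)"] by auto
    define lam where "lam = u \<bullet> (A *v u)"
    have uV: "u \<in> V" and un: "norm u = 1" using u unfolding S_def by auto
    have uu: "u \<bullet> u = 1" using un by (simp add: norm_eq_1)
    have Q: "v \<bullet> (A *v v) \<le> lam * (v \<bullet> v)" if "v \<in> V" for v
    proof (cases "v = 0")
      case True thus ?thesis by simp
    next
      case False
      let ?w = "(1 / norm v) *\<^sub>R v"
      have "?w \<in> S" unfolding S_def using that False less.prems(1) by (simp add: subspace_scale)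
      hence "?w \<bullet> (A *v ?w) \<le> lam" using umax lam_def by blast
      hence "(1 / norm v)^2 * (v \<bullet> (A *v v)) \<le> lam"
        by (simp add: matrix_vector_mult_scaleR power2_eq_square)
      moreover have "(1 / norm v)^2 * (v \<bullet> v) = 1" using False
        by (simp add: power2_norm_eq_inner[symmetric] field_simps)
      moreover have "(1 / norm v)^2 > 0" using False by simp
      ultimately show ?thesis
      proof -
        assume h1: "(1 / norm v)^2 * (v \<bullet> (A *v v)) \<le> lam" and h2: "(1 / norm v)^2 * (v \<bullet> v) = 1"
        have "v \<bullet> (A *v v) = ((1 / norm v)^2 * (v \<bullet> v)) * (v \<bullet> (A *v v))" using h2 by simp
        also have "\<dots> = ((1 / norm v)^2 * (v \<bullet> (A *v v))) * (v \<bullet> v)" by (simp add: mult_ac)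
        also have "\<dots> \<le> lam * (v \<bullet> v)" by (rule mult_right_mono[OF h1]) simp
        finally show ?thesis .
      qed
    qed
    have orth: "w \<bullet> (A *v u) = 0" if "w \<in> V" "u \<bullet> w = 0" for w
    proof -
      define a where "a = w \<bullet> (A *v u)"
      define c where "c = w \<bullet> (A *v w)"
      have "2 * t * a \<le> t\<^sup>2 * (lam * (w \<bullet> w) - c)" for t
      proof -
        have "u + t *\<^sub>R w \<in> V" using that uV less.prems(1) by (simp add: subspace_add subspace_scale)
        from Q[OF this]
        have "(u + t *\<^sub>R w) \<bullet> (A *v (u + t *\<^sub>R w)) \<le> lam * ((u + t *\<^sub>R w) \<bullet> (u + t *\<^sub>R w))" .
        moreover have "u \<bullet> (A *v w) = a" unfolding a_def using sym_inner[OF sym] by (simp add: inner_commute)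
        moreover have "(u + t *\<^sub>R w) \<bullet> (A *v (u + t *\<^sub>R w)) =
            u \<bullet> (A *v u) + t * (u \<bullet> (A *v w)) + t * (w \<bullet> (A *v u)) + t\<^sup>2 * (w \<bullet> (A *v w))"
          by (simp add: matrix_vector_right_distrib matrix_vector_mult_scaleR inner_add_left inner_add_right
              power2_eq_square distrib_left)
        moreover have "(u + t *\<^sub>R w) \<bullet> (u + t *\<^sub>R w) = u \<bullet> u + 2 * t * (u \<bullet> w) + t\<^sup>2 * (w \<bullet> w)"
          by (simp add: inner_add_left inner_add_right power2_eq_square inner_commute)
        ultimately have "lam + 2 * t * a + t\<^sup>2 * c \<le> lam * (1 + t\<^sup>2 * (w \<bullet> w))"
          using that(2) uu unfolding lam_def a_def c_def by simp
        thus ?thesis by (simp add: algebra_simps)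
      qed
      thus ?thesis using small_coeff_zero a_def by blast
    qed
    have eig: "A *v u = lam *\<^sub>R u"
    proof -
      define z where "z = A *v u - lam *\<^sub>R u"
      have zV: "z \<in> V" unfolding z_def using less.prems uV by (simp add: subspace_diff subspace_scale)
      have uz: "u \<bullet> z = 0" unfolding z_def using uu lam_def by (simp add: inner_diff_right)
      have "z \<bullet> (A *v u) = 0" using orth[OF zV uz] .
      hence "z \<bullet> z = 0" unfolding z_def using uz[unfolded z_def]
        by (simp add: inner_diff_left inner_diff_right inner_commute)
      thus ?thesis unfolding z_def by simp
    qed
    define W where "W = V \<inter> {w. u \<bullet> w = 0}"
    have subW: "subspace W" unfolding W_def
      by (intro subspace_inter less.prems(1)) (auto simp: subspace_def inner_add_right)
    have invW: "\<forall>w\<in>W. A *v w \<in> W"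
    proof
      fix w assume "w \<in> W"
      hence "w \<in> V" "u \<bullet> w = 0" unfolding W_def by auto
      moreover have "u \<bullet> (A *v w) = (A *v u) \<bullet> w" by (rule sym_inner[OF sym])
      ultimately show "A *v w \<in> W" unfolding W_def using less.prems(2) eig by auto
    qed
    have "dim W < dim V"
    proof (rule eucl.dim_psubset)
      have "u \<notin> W" unfolding W_def using uu by simp
      moreover have "W \<subseteq> V" unfolding W_def by blast
      ultimately have "W \<subset> V" using uV by blast
      moreover have "span W = W" using subW by simp
      moreover have "span V = V" using less.prems(1) by simp
      ultimately show "span W \<subset> span V" by (simp only:)
    qed
    from less.hyps[OF this subW invW] obtain B' where B':
      "finite B'" "B' \<subseteq> W" "\<forall>b\<in>B'. norm b = 1" "\<forall>b\<in>B'. \<forall>c\<in>B'. b \<noteq> c \<longrightarrow> b \<bullet> c = 0"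
      "span B' = W" "\<forall>b\<in>B'. \<exists>\<mu>. A *v b = \<mu> *\<^sub>R b" by blast
    have ub: "b \<in> B' \<Longrightarrow> u \<bullet> b = 0 \<and> b \<bullet> u = 0" for b using B'(2) unfolding W_def by (auto simp: inner_commute)
    show ?thesis
    proof (intro exI[of _ "insert u B'"] conjI)
      show "finite (insert u B')" using B' by simp
      show "insert u B' \<subseteq> V" using B'(2) uV unfolding W_def by auto
      show "\<forall>b\<in>insert u B'. norm b = 1" using B' un by auto
      show "\<forall>b\<in>insert u B'. \<forall>c\<in>insert u B'. b \<noteq> c \<longrightarrow> b \<bullet> c = 0" using B'(4) ub by blast
      show "\<forall>b\<in>insert u B'. \<exists>\<mu>. A *v b = \<mu> *\<^sub>R b" using B'(6) eig by blast
      show "span (insert u B') = V"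
      proof
        show "span (insert u B') \<subseteq> V"
          using B'(2) uV less.prems(1) unfolding W_def by (intro span_minimal) auto
        show "V \<subseteq> span (insert u B')"
        proof
          fix v assume "v \<in> V"
          have "v - (u \<bullet> v) *\<^sub>R u \<in> W" unfolding W_def using \<open>v \<in> V\<close> uV less.prems(1) uu
            by (simp add: subspace_diff subspace_scale inner_diff_right)
          hence "v - (u \<bullet> v) *\<^sub>R u \<in> span (insert u B')" using B'(5) span_mono[of B' "insert u B'"] by blast
          moreover have "(u \<bullet> v) *\<^sub>R u \<in> span (insert u B')" by (simp add: span_base span_mul)
          ultimately have "(v - (u \<bullet> v) *\<^sub>R u) + (u \<bullet> v) *\<^sub>R u \<in> span (insert u B')" by (rule span_add)
          thus "v \<in> span (insert u B')" by simp
        qed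
      qed
    qed
  qed
qed

lemma spectral:
  fixes A :: "real^'n^'n" assumes sym: "transpose A = A"
  shows "\<exists>B lam. onb B \<and> (\<forall>b\<in>B. A *v b = lam b *\<^sub>R b)"
proof -
  obtain B where B: "finite B" "\<forall>b\<in>B. norm b = 1" "\<forall>b\<in>B. \<forall>c\<in>B. b \<noteq> c \<longrightarrow> b \<bullet> c = 0"
      "span B = UNIV" "\<forall>b\<in>B. \<exists>\<mu>. A *v b = \<mu> *\<^sub>R b"
    using spectral_sub[OF sym, of UNIV] by auto
  have bb: "b \<bullet> b = 1" if "b \<in> B" for b using B(2) that by (simp add: norm_eq_1)
  have exp: "v = (\<Sum>b\<in>B. (b \<bullet> v) *\<^sub>R b)" for v
  proof -
    have "v \<in> span B" using B(4) by simp
    then obtain u where u: "v = (\<Sum>c\<in>B. u c *\<^sub>R c)" using B(1) span_finite[of B] by auto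
    have "b \<bullet> v = u b" if "b \<in> B" for b
    proof -
      have "b \<bullet> v = (\<Sum>c\<in>B. u c * (b \<bullet> c))" unfolding u by (simp add: inner_sum_right)
      also have "\<dots> = (\<Sum>c\<in>B. if c = b then u b else 0)"
        using B(3) bb that by (intro sum.cong) auto
      also have "\<dots> = u b" using B(1) that by simp
      finally show ?thesis .
    qed
    thus ?thesis using u by simp
  qed
  have "onb B" unfolding onb_def using B(1-3) exp by blast
  moreover have "\<forall>b\<in>B. A *v b = (SOME \<mu>. A *v b = \<mu> *\<^sub>R b) *\<^sub>R b"
    using B(5) by (metis (mono_tags) someI_ex)
  ultimately show ?thesis by (intro exI[of _ B] exI[of _ "\<lambda>b. SOME \<mu>. A *v b = \<mu> *\<^sub>R b"]) simp
qed

definition alg :: "(real^'n^'n) set \<Rightarrow> bool" where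
  "alg K \<longleftrightarrow> (\<forall>c A. A \<in> K \<longrightarrow> c *\<^sub>R A \<in> K) \<and>
      (\<forall>A B. A \<in> K \<longrightarrow> B \<in> K \<longrightarrow> A + B \<in> K) \<and>
      (\<forall>A B. A \<in> K \<longrightarrow> B \<in> K \<longrightarrow> A ** B \<in> K) \<and> mat 1 \<in> K"

lemma alg_scale: "alg K \<Longrightarrow> A \<in> K \<Longrightarrow> c *\<^sub>R A \<in> K" unfolding alg_def by blast
lemma alg_add: "alg K \<Longrightarrow> A \<in> K \<Longrightarrow> B \<in> K \<Longrightarrow> A + B \<in> K" unfolding alg_def by blast
lemma alg_mult: "alg K \<Longrightarrow> A \<in> K \<Longrightarrow> B \<in> K \<Longrightarrow> A ** B \<in> K" unfolding alg_def by blast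
lemma alg_one: "alg K \<Longrightarrow> mat 1 \<in> K" unfolding alg_def by blast

lemma transpose_add': "transpose (A + B) = transpose A + transpose (B::real^'n^'m)"
  by (simp add: transpose_def vec_eq_iff)

lemma alg_sym: assumes "alg K" shows "alg {X. X \<in> K \<and> transpose X \<in> K}"
  using assms unfolding alg_def
  by (auto simp: transpose_scalar matrix_transpose_mul transpose_add')

lemma interp_aux:
  assumes K: "alg K" and AK: "A \<in> K" and B: "onb B" and eig: "\<forall>b\<in>B. A *v b = lam b *\<^sub>R b"
  shows "finite S \<Longrightarrow> \<forall>h. \<exists>P\<in>K. \<forall>b\<in>B. lam b \<in> S \<longrightarrow> P *v b = h (lam b) *\<^sub>R b"
proof (induction S rule: finite_induct)
  case empty
  show ?case by (intro allI bexI[of _ "mat 1"]) (auto simp: alg_one[OF K])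
next
  case (insert \<nu> S)
  show ?case
  proof
    fix h :: "real \<Rightarrow> real"
    obtain P0 where P0: "P0 \<in> K" "\<forall>b\<in>B. lam b \<in> S \<longrightarrow> P0 *v b = ((h (lam b) - h \<nu>) / (lam b - \<nu>)) *\<^sub>R b"
      using spec[OF insert.IH, of "\<lambda>s. (h s - h \<nu>) / (s - \<nu>)"] by auto
    define P where "P = h \<nu> *\<^sub>R mat 1 + P0 ** (A + (- \<nu>) *\<^sub>R mat 1)"
    have "P \<in> K" unfolding P_def using K AK P0(1)
      by (intro alg_add alg_scale alg_mult alg_one) auto
    moreover have "P *v b = h (lam b) *\<^sub>R b" if "b \<in> B" "lam b \<in> insert \<nu> S" for b
    proof -
      have "(A + (- \<nu>) *\<^sub>R mat 1) *v b = (lam b - \<nu>) *\<^sub>R b"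
        using eig that(1) by (simp add: matrix_vector_mult_add_rdistrib scaleR_matrix_vector_assoc[symmetric] algebra_simps)
      hence "P *v b = h \<nu> *\<^sub>R b + (lam b - \<nu>) *\<^sub>R (P0 *v b)"
        unfolding P_def by (simp add: matrix_vector_mult_add_rdistrib scaleR_matrix_vector_assoc[symmetric]
            matrix_vector_mul_assoc[symmetric] matrix_vector_mult_scaleR)
      moreover have "(lam b - \<nu>) *\<^sub>R (P0 *v b) = (h (lam b) - h \<nu>) *\<^sub>R b" if "lam b \<in> S"
        using P0(2) \<open>b \<in> B\<close> that insert.hyps(2) by auto
      ultimately show ?thesis using that(2)
        by (cases "lam b = \<nu>") (auto simp: algebra_simps)
    qed
    ultimately show "\<exists>P\<in>K. \<forall>b\<in>B. lam b \<in> insert \<nu> S \<longrightarrow> P *v b = h (lam b) *\<^sub>R b" by blast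
  qed
qed

lemma interp:
  assumes K: "alg K" and AK: "A \<in> K" and B: "onb B" and eig: "\<forall>b\<in>B. A *v b = lam b *\<^sub>R b"
  shows "mk B (\<lambda>b. h (lam b)) \<in> K"
proof -
  have "finite (lam ` B)" using B unfolding onb_def by simp
  from interp_aux[OF assms this] obtain P where P: "P \<in> K" "\<forall>b\<in>B. P *v b = h (lam b) *\<^sub>R b" by blast
  have "P = mk B (\<lambda>b. h (lam b))" using P(2) by (intro onb_eqI[OF B]) (simp add: mk_mulv_basis[OF B])
  thus ?thesis using P(1) by simp
qed

lemma mk_psd: "onb B \<Longrightarrow> \<forall>b\<in>B. h b \<ge> 0 \<Longrightarrow> v \<bullet> (mk B h *v v) \<ge> 0"
  unfolding mk_quad by (intro sum_nonneg) auto

lemma onb_zero: assumes "onb B" "\<forall>b\<in>B. b \<bullet> v = 0" shows "v = 0"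
  using onb_expand[OF assms(1), of v] assms(2) by simp

lemma mk_pd: assumes B: "onb B" and h: "\<forall>b\<in>B. h b > 0" and v: "v \<noteq> 0"
  shows "v \<bullet> (mk B h *v v) > 0"
proof -
  obtain b0 where b0: "b0 \<in> B" "b0 \<bullet> v \<noteq> 0" using onb_zero[OF B] v by blast
  have fin: "finite B" using B unfolding onb_def by simp
  have "0 < h b0 * (b0 \<bullet> v)\<^sup>2" using h b0 by simp
  also have "\<dots> \<le> (\<Sum>b\<in>B. h b * (b \<bullet> v)\<^sup>2)"
    using fin b0(1) h by (intro member_le_sum) (auto intro: less_imp_le)
  finally show ?thesis unfolding mk_quad .
qed

lemma mk_eig: assumes "onb B" "\<forall>b\<in>B. A *v b = lam b *\<^sub>R b" shows "A = mk B lam"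
proof (rule onb_eqI[OF assms(1)])
  fix b assume b: "b \<in> B"
  have 1: "mk B lam *v b = lam b *\<^sub>R b" by (rule mk_mulv_basis[OF assms(1) b])
  have 2: "A *v b = lam b *\<^sub>R b" using assms(2) b by blast
  show "A *v b = mk B lam *v b" unfolding 1 2 ..
qed

lemma inner_transpose: "transpose A \<bullet> transpose B = A \<bullet> (B::real^'n^'m)"
  unfolding transpose_def inner_vec_def inner_real_def by simp (rule sum.swap)

lemma frob_inner_eq: "frob_inner A B = A \<bullet> (B::real^'n^'n)"
  unfolding frob_inner_def trace_def matrix_matrix_mult_def transpose_def inner_vec_def inner_real_def
  by simp (rule sum.swap)

lemma outer_inner: "outer x x \<bullet> C = x \<bullet> (C *v x)"
  unfolding outer_def inner_vec_def matrix_vector_mult_def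
  by (simp add: sum_distrib_left mult_ac)

lemma mat1_inner: "mat 1 \<bullet> C = trace (C::real^'n^'n)"
proof -
  have "mat 1 \<bullet> C = (\<Sum>i\<in>UNIV. \<Sum>j\<in>UNIV. (if i = j then C $ i $ j else 0))"
    unfolding mat_def inner_vec_def inner_real_def by (intro sum.cong refl) auto
  also have "\<dots> = trace C" unfolding trace_def by simp
  finally show ?thesis .
qed

lemma matrix_diff_ldistrib: "(A::real^'n^'m) ** (B - C) = A ** B - A ** C"
  by (simp add: matrix_matrix_mult_def vec_eq_iff sum_subtractf algebra_simps)
lemma matrix_diff_rdistrib: "((B::real^'n^'m) - C) ** A = B ** A - C ** A"
  by (simp add: matrix_matrix_mult_def vec_eq_iff sum_subtractf algebra_simps)

lemma mk_cong: "(\<And>b. b \<in> B \<Longrightarrow> h b = g b) \<Longrightarrow> mk B h = mk B g"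
  unfolding mk_def by (rule sum.cong) auto

lemma trace_identity:
  fixes H G Gi :: "real^'n^'n"
  assumes "G ** Gi = mat 1" "Gi ** G = mat 1"
  shows "trace (H ** H ** Gi) + trace G - 2 * trace H = trace ((H - G) ** Gi ** (H - G))"
proof -
  have "(H - G) ** Gi ** (H - G) = (H ** Gi - mat 1) ** (H - G)"
    using assms by (simp add: matrix_diff_rdistrib)
  also have "\<dots> = H ** Gi ** H - H ** Gi ** G - H + G"
    by (simp add: matrix_diff_rdistrib matrix_diff_ldistrib)
  also have "H ** Gi ** G = H" using assms by (simp add: matrix_mul_assoc[symmetric])
  finally have e: "(H - G) ** Gi ** (H - G) = H ** Gi ** H - H - H + G" .
  have "trace (H ** Gi ** H) = trace (H ** H ** Gi)"
    by (metis matrix_mul_assoc trace_mul_sym)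
  thus ?thesis unfolding e trace_add trace_sub by simp
qed

lemma inv_unique: fixes G :: "real^'n^'n" assumes "G ** X = mat 1" shows "matrix_inv G = X"
proof -
  have XG: "X ** G = mat 1" using assms matrix_left_right_inverse by blast
  have "\<exists>A'. G ** A' = mat 1 \<and> A' ** G = mat 1" using assms XG by blast
  then have s: "G ** matrix_inv G = mat 1 \<and> matrix_inv G ** G = mat 1"
    unfolding matrix_inv_def by (rule someI_ex)
  have "matrix_inv G = matrix_inv G ** (G ** X)" using assms by simp
  also have "\<dots> = X" using s by (simp add: matrix_mul_assoc)
  finally show ?thesis .
qed

lemma pd_inverse:
  fixes G :: "real^'n^'n"
  assumes K: "alg K" and GK: "G \<in> K" and sym: "transpose G = G" and pd: "\<forall>v. v \<noteq> 0 \<longrightarrow> 0 < v \<bullet> (G *v v)"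
  shows "\<exists>BG mu. onb BG \<and> (\<forall>b\<in>BG. mu b > 0) \<and> G = mk BG mu
     \<and> matrix_inv G = mk BG (\<lambda>b. 1 / mu b) \<and> mk BG (\<lambda>b. 1 / mu b) \<in> K
     \<and> G ** mk BG (\<lambda>b. 1 / mu b) = mat 1 \<and> mk BG (\<lambda>b. 1 / mu b) ** G = mat 1"
proof -
  obtain BG mu where BG: "onb BG" "\<forall>b\<in>BG. G *v b = mu b *\<^sub>R b" using spectral[OF sym] by blast
  have pos: "mu b > 0" if "b \<in> BG" for b
  proof -
    have "b \<noteq> 0" using BG(1) that unfolding onb_def by auto
    hence "0 < b \<bullet> (G *v b)" using pd by blast
    also have "\<dots> = mu b" using BG that onb_inner_self[OF BG(1) that] by simp
    finally show ?thesis .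
  qed
  have Gmk: "G = mk BG mu" by (rule mk_eig[OF BG])
  have inK: "mk BG (\<lambda>b. 1 / mu b) \<in> K" using interp[OF K GK BG(1) BG(2), of "\<lambda>s. 1 / s"] by simp
  have r: "G ** mk BG (\<lambda>b. 1 / mu b) = mat 1"
  proof -
    have "G ** mk BG (\<lambda>b. 1 / mu b) = mk BG (\<lambda>b. mu b * (1 / mu b))" unfolding Gmk by (rule mk_mult[OF BG(1)])
    also have "\<dots> = mk BG (\<lambda>_. 1)" using pos by (intro mk_cong) (metis less_irrefl nonzero_mult_div_cancel_left div_by_1 times_divide_eq_right)
    finally show ?thesis using mk_one[OF BG(1)] by simp
  qed
  have l: "mk BG (\<lambda>b. 1 / mu b) ** G = mat 1" using r matrix_left_right_inverse by blast
  show ?thesis using BG(1) pos Gmk inv_unique[OF r] inK r l by blast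
qed

lemma matrix_add_rdistrib': "((B::real^'n^'m) + C) ** A = B ** A + C ** A"
  by (simp add: matrix_matrix_mult_def vec_eq_iff sum.distrib algebra_simps)
lemma transpose_diff': "transpose (A - B) = transpose A - transpose (B::real^'n^'m)"
  by (simp add: transpose_def vec_eq_iff)
lemma trace_scaleR: "trace (c *\<^sub>R A) = c * trace (A::real^'n^'n)"
  by (simp add: trace_def sum_distrib_left)

lemma quad_trace:
  fixes D :: "real^'n^'n"
  assumes BG: "onb BG" and mu: "\<forall>b\<in>BG. mu b > 0" and D: "transpose D = D"
  shows "trace (D ** mk BG (\<lambda>b. 1 / mu b) ** D) \<ge> 0"
    and "trace (D ** mk BG (\<lambda>b. 1 / mu b) ** D) = 0 \<Longrightarrow> D = 0"
proof -
  let ?Gi = "mk BG (\<lambda>b. 1 / mu b)"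
  have pos: "\<forall>b\<in>BG. 1 / mu b > 0" using mu by simp
  have e: "trace (D ** ?Gi ** D) = (\<Sum>b\<in>BG. (D *v b) \<bullet> (?Gi *v (D *v b)))"
    unfolding trace_onb[OF BG]
  proof (intro sum.cong refl)
    fix b
    have "(D ** ?Gi ** D) *v b = D *v (?Gi *v (D *v b))" by (simp only: matrix_vector_mul_assoc matrix_mul_assoc)
    thus "b \<bullet> ((D ** ?Gi ** D) *v b) = (D *v b) \<bullet> (?Gi *v (D *v b))"
      using sym_inner[OF D, of b "?Gi *v (D *v b)"] by simp
  qed
  have nn: "\<forall>b\<in>BG. (D *v b) \<bullet> (?Gi *v (D *v b)) \<ge> 0"
    using mk_psd[OF BG] pos by (simp add: less_imp_le)
  show "trace (D ** ?Gi ** D) \<ge> 0" unfolding e using nn by (intro sum_nonneg) auto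
  assume z: "trace (D ** ?Gi ** D) = 0"
  have fin: "finite BG" using BG unfolding onb_def by simp
  define f where "f b = (D *v b) \<bullet> (?Gi *v (D *v b))" for b
  have s0: "sum f BG = 0" using z unfolding e f_def .
  have nn': "\<forall>b\<in>BG. f b \<ge> 0" using nn unfolding f_def .
  have f0: "\<forall>b\<in>BG. f b = 0" using sum_nonneg_eq_0_iff[OF fin, of f] nn' s0 by simp
  have "D *v b = 0" if b: "b \<in> BG" for b
  proof (rule ccontr)
    assume "D *v b \<noteq> 0"
    from mk_pd[OF BG pos this] have "f b > 0" unfolding f_def .
    with f0 b show False by simp
  qed
  hence "\<forall>b\<in>BG. D *v b = 0" by blast
  thus "D = 0" by (intro onb_eqI[OF BG]) simp
qed


lemma psd_quad_le:
  fixes G :: "real^'n^'n"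
  assumes G: "G \<in> psd_set" and tr: "trace G \<le> 1"
  shows "y \<bullet> (G *v y) \<le> y \<bullet> y"
proof -
  have Gs: "transpose G = G" and psd: "\<forall>v. 0 \<le> v \<bullet> (G *v v)" using G unfolding psd_set_def by auto
  obtain BG mu where BG: "onb BG" "\<forall>b\<in>BG. G *v b = mu b *\<^sub>R b" using spectral[OF Gs] by blast
  have mu: "mu b \<ge> 0" if "b \<in> BG" for b
    using psd[rule_format, of b] BG(2) that onb_inner_self[OF BG(1) that] by simp
  have Gmk: "G = mk BG mu" by (rule mk_eig[OF BG])
  have "y \<bullet> (G *v y) = (\<Sum>b\<in>BG. mu b * (b \<bullet> y)\<^sup>2)" unfolding Gmk by (rule mk_quad)
  also have "\<dots> \<le> (\<Sum>b\<in>BG. mu b * (y \<bullet> y))"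
  proof (intro sum_mono mult_left_mono)
    fix b assume b: "b \<in> BG"
    show "0 \<le> mu b" using mu b .
    have "\<bar>b \<bullet> y\<bar> \<le> norm b * norm y" by (rule Cauchy_Schwarz_ineq2)
    also have "\<dots> = norm y" using BG(1) b unfolding onb_def by simp
    finally have "(b \<bullet> y)\<^sup>2 \<le> (norm y)\<^sup>2" by (metis abs_le_square_iff abs_norm_cancel)
    thus "(b \<bullet> y)\<^sup>2 \<le> y \<bullet> y" by (simp add: power2_norm_eq_inner)
  qed
  also have "\<dots> = trace G * (y \<bullet> y)" unfolding Gmk trace_mk[OF BG(1)] by (simp add: sum_distrib_right)
  also have "\<dots> \<le> 1 * (y \<bullet> y)" by (rule mult_right_mono[OF tr]) simp
  finally show ?thesis by simp
qed

lemma H_norm_bdd: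
  fixes Hs :: "(real^'n^'n) set"
  assumes "Hs \<subseteq> psd_set"
  shows "bdd_above {sqrt (y \<bullet> (H *v y)) | H. H \<in> Hs \<and> trace H \<le> 1}"
proof (rule bdd_aboveI)
  fix z assume "z \<in> {sqrt (y \<bullet> (H *v y)) | H. H \<in> Hs \<and> trace H \<le> 1}"
  then obtain H where H: "H \<in> Hs" "trace H \<le> 1" "z = sqrt (y \<bullet> (H *v y))" by blast
  have "y \<bullet> (H *v y) \<le> y \<bullet> y" using psd_quad_le[of H] H assms by blast
  thus "z \<le> sqrt (y \<bullet> y)" using H(3) by simp
qed

context
  fixes K :: "(real^'n^'n) set" and Ks Hs :: "(real^'n^'n) set" and x :: "real^'n"
    and A :: "real^'n^'n" and B :: "(real^'n) set" and lam :: "real^'n \<Rightarrow> real"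
  assumes algK: "alg K" and Ks_def: "Ks = {X. X \<in> K \<and> transpose X \<in> K}" and Hs_def: "Hs = psd_set \<inter> K"
    and AKs: "A \<in> Ks" and Asym: "transpose A = A" and star: "\<forall>C\<in>Ks. A \<bullet> C = x \<bullet> (C *v x)"
    and onbB: "onb B" and eig: "\<forall>b\<in>B. A *v b = lam b *\<^sub>R b"
begin

lemma algKs: "alg Ks" unfolding Ks_def by (rule alg_sym[OF algK])

lemma Hs_Ks: "G \<in> Hs \<Longrightarrow> G \<in> Ks \<and> transpose G = G \<and> (\<forall>v. 0 \<le> v \<bullet> (G *v v))"
  unfolding Hs_def Ks_def psd_set_def by auto

lemma mkKs: "mk B (\<lambda>b. h (lam b)) \<in> Ks" by (rule interp[OF algKs AKs onbB eig])

lemma Amk: "A = mk B lam" by (rule mk_eig[OF onbB eig])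

lemma finB: "finite B" using onbB unfolding onb_def by simp

lemma I1: "(\<Sum>b\<in>B. lam b * h (lam b)) = (\<Sum>b\<in>B. h (lam b) * (b \<bullet> x)\<^sup>2)"
proof -
  let ?C = "mk B (\<lambda>b. h (lam b))"
  have "A \<bullet> ?C = trace (transpose A ** ?C)" using frob_inner_eq frob_inner_def by metis
  also have "\<dots> = trace (mk B (\<lambda>b. lam b * h (lam b)))" unfolding Asym by (subst Amk) (simp add: mk_mult[OF onbB])
  also have "\<dots> = (\<Sum>b\<in>B. lam b * h (lam b))" by (rule trace_mk[OF onbB])
  finally have 1: "A \<bullet> ?C = (\<Sum>b\<in>B. lam b * h (lam b))" .
  have "A \<bullet> ?C = x \<bullet> (?C *v x)" using star mkKs by blast
  also have "\<dots> = (\<Sum>b\<in>B. h (lam b) * (b \<bullet> x)\<^sup>2)" by (rule mk_quad)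
  finally show ?thesis using 1 by simp
qed

lemma lam_nonneg: "b \<in> B \<Longrightarrow> lam b \<ge> 0"
proof (rule ccontr)
  assume b0: "b \<in> B" "\<not> lam b \<ge> 0"
  let ?h = "\<lambda>s::real. if s < 0 then 1 else (0::real)"
  have "(\<Sum>c\<in>B. lam c * ?h (lam c)) = lam b * ?h (lam b) + (\<Sum>c\<in>B - {b}. lam c * ?h (lam c))"
    using finB b0(1) by (simp add: sum.remove)
  also have "\<dots> < 0"
  proof -
    have "(\<Sum>c\<in>B - {b}. lam c * ?h (lam c)) \<le> 0" by (intro sum_nonpos) auto
    thus ?thesis using b0(2) by simp
  qed
  finally have "(\<Sum>c\<in>B. ?h (lam c) * (c \<bullet> x)\<^sup>2) < 0" using I1[of ?h] by simp
  moreover have "(\<Sum>c\<in>B. ?h (lam c) * (c \<bullet> x)\<^sup>2) \<ge> 0" by (intro sum_nonneg) auto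
  ultimately show False by simp
qed


lemma obj_formula:
  fixes d :: real and H :: "real^'n^'n"
  assumes HH: "H ** H = A + d *\<^sub>R mat 1" and GH: "G \<in> Hs \<inter> pd_set"
  shows "\<exists>BG mu. onb BG \<and> (\<forall>b\<in>BG. mu b > 0) \<and> matrix_inv G = mk BG (\<lambda>b. 1 / mu b)
     \<and> G ** matrix_inv G = mat 1 \<and> matrix_inv G ** G = mat 1
     \<and> precond_obj (outer x x + d *\<^sub>R mat 1) G = trace (H ** H ** matrix_inv G) + trace G"
proof -
  have GK: "G \<in> Ks" and Gs: "transpose G = G" using Hs_Ks GH by auto
  have pd: "\<forall>v. v \<noteq> 0 \<longrightarrow> 0 < v \<bullet> (G *v v)" using GH unfolding pd_set_def by auto
  obtain BG mu where BG: "onb BG" "\<forall>b\<in>BG. mu b > 0" "matrix_inv G = mk BG (\<lambda>b. 1 / mu b)"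
     "mk BG (\<lambda>b. 1 / mu b) \<in> Ks" "G ** mk BG (\<lambda>b. 1 / mu b) = mat 1" "mk BG (\<lambda>b. 1 / mu b) ** G = mat 1"
    using pd_inverse[OF algKs GK Gs pd] by blast
  define Gi where "Gi = mk BG (\<lambda>b. 1 / mu b)"
  have "frob_inner (outer x x + d *\<^sub>R mat 1) Gi = (outer x x + d *\<^sub>R mat 1) \<bullet> Gi" by (rule frob_inner_eq)
  also have "\<dots> = x \<bullet> (Gi *v x) + d * trace Gi" by (simp add: inner_add_left outer_inner mat1_inner)
  also have "x \<bullet> (Gi *v x) = A \<bullet> Gi" using star BG(4) unfolding Gi_def by simp
  also have "A \<bullet> Gi = trace (A ** Gi)" using frob_inner_eq[of A Gi] unfolding frob_inner_def Asym by simp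
  also have "trace (A ** Gi) + d * trace Gi = trace ((A + d *\<^sub>R mat 1) ** Gi)"
    by (simp add: matrix_add_rdistrib' trace_add trace_scaleR scalar_matrix_assoc[symmetric])
  finally have "frob_inner (outer x x + d *\<^sub>R mat 1) Gi = trace (H ** H ** Gi)" unfolding HH .
  thus ?thesis using BG unfolding precond_obj_def Gi_def by auto
qed

lemma P_pd_eq:
  fixes d :: real assumes pos: "\<forall>b\<in>B. lam b + d > 0"
  shows "P_pd Hs (outer x x + d *\<^sub>R mat 1) = mk B (\<lambda>b. sqrt (lam b + d))"
proof -
  define H where "H = mk B (\<lambda>b. sqrt (lam b + d))"
  define M where "M = outer x x + d *\<^sub>R mat 1"
  have HKs: "H \<in> Ks" unfolding H_def using mkKs[of "\<lambda>s. sqrt (s + d)"] by simp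
  have Hs': "transpose H = H" unfolding H_def by (rule transpose_mk)
  have Hpd: "\<forall>v. v \<noteq> 0 \<longrightarrow> 0 < v \<bullet> (H *v v)" unfolding H_def using mk_pd[OF onbB] pos by simp
  have Hpsd: "\<forall>v. 0 \<le> v \<bullet> (H *v v)" unfolding H_def using mk_psd[OF onbB, of "\<lambda>b. sqrt (lam b + d)"] pos by (simp add: less_imp_le)
  have HH_in: "H \<in> Hs \<inter> pd_set" using HKs Hs' Hpd Hpsd unfolding Hs_def Ks_def psd_set_def pd_set_def
    by auto
  have HH: "H ** H = A + d *\<^sub>R mat 1"
  proof -
    have "H ** H = mk B (\<lambda>b. sqrt (lam b + d) * sqrt (lam b + d))" unfolding H_def by (rule mk_mult[OF onbB])
    also have "\<dots> = mk B (\<lambda>b. lam b + d * 1)" using pos by (intro mk_cong) (simp add: less_imp_le)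
    also have "\<dots> = mk B lam + d *\<^sub>R mk B (\<lambda>_. 1)" by (rule mk_add[OF onbB])
    finally show ?thesis using Amk mk_one[OF onbB] by simp
  qed
  have objH: "precond_obj M H = 2 * trace H"
  proof -
    obtain BG mu where "H ** matrix_inv H = mat 1" "precond_obj M H = trace (H ** H ** matrix_inv H) + trace H"
      using obj_formula[OF HH HH_in] unfolding M_def by blast
    thus ?thesis by (simp add: matrix_mul_assoc[symmetric])
  qed
  have diff: "precond_obj M G - precond_obj M H \<ge> 0 \<and> (precond_obj M G - precond_obj M H = 0 \<longrightarrow> G = H)"
    if G: "G \<in> Hs \<inter> pd_set" for G
  proof -
    obtain BG mu where BG: "onb BG" "\<forall>b\<in>BG. mu b > 0" "matrix_inv G = mk BG (\<lambda>b. 1 / mu b)"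
      "G ** matrix_inv G = mat 1" "matrix_inv G ** G = mat 1"
      "precond_obj M G = trace (H ** H ** matrix_inv G) + trace G"
      using obj_formula[OF HH G] unfolding M_def by blast
    have Gs: "transpose G = G" using G unfolding pd_set_def by auto
    have D: "transpose (H - G) = H - G" using Hs' Gs by (simp add: transpose_diff')
    have "precond_obj M G - precond_obj M H = trace ((H - G) ** matrix_inv G ** (H - G))"
      using trace_identity[OF BG(4) BG(5), of H] BG(6) objH by simp
    thus ?thesis using quad_trace[OF BG(1) BG(2) D] BG(3) by auto
  qed
  have "P_pd Hs M = H"
    unfolding P_pd_def
  proof (rule the_equality)
    show "H \<in> Hs \<inter> pd_set \<and> (\<forall>H'\<in>Hs \<inter> pd_set. precond_obj M H \<le> precond_obj M H')"
      using HH_in diff by auto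
    fix H' assume H': "H' \<in> Hs \<inter> pd_set \<and> (\<forall>G\<in>Hs \<inter> pd_set. precond_obj M H' \<le> precond_obj M G)"
    hence "precond_obj M H' \<le> precond_obj M H" using HH_in by blast
    thus "H' = H" using diff[of H'] H' by auto
  qed
  thus ?thesis unfolding M_def H_def .
qed


lemma lam_pos_if_pd: assumes "outer x x \<in> pd_set" "b \<in> B" shows "lam b > 0"
proof (rule ccontr)
  assume "\<not> lam b > 0"
  hence lb: "lam b = 0" using lam_nonneg[OF assms(2)] by simp
  let ?h = "\<lambda>s::real. if s = 0 then 1 else (0::real)"
  have "(\<Sum>c\<in>B. lam c * ?h (lam c)) = 0" by (intro sum.neutral) auto
  hence s0: "(\<Sum>c\<in>B. ?h (lam c) * (c \<bullet> x)\<^sup>2) = 0" using I1[of ?h] by simp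
  have "\<forall>c\<in>B. ?h (lam c) * (c \<bullet> x)\<^sup>2 = 0"
    using sum_nonneg_eq_0_iff[OF finB, of "\<lambda>c. ?h (lam c) * (c \<bullet> x)\<^sup>2"] s0 by simp
  hence "(b \<bullet> x)\<^sup>2 = 0" using assms(2) lb by force
  moreover have "b \<noteq> 0" using onbB assms(2) unfolding onb_def by auto
  hence "0 < b \<bullet> (outer x x *v b)" using assms(1) unfolding pd_set_def by blast
  moreover have "b \<bullet> (outer x x *v b) = (b \<bullet> x)\<^sup>2"
    by (simp add: outer_mulv power2_eq_square inner_commute)
  ultimately show False by simp
qed

lemma P_H_eq: "P_H Hs (outer x x) = mk B (\<lambda>b. sqrt (lam b))"
proof (cases "outer x x \<in> pd_set")
  case True
  have "\<forall>b\<in>B. lam b + 0 > 0" using lam_pos_if_pd[OF True] by simp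
  from P_pd_eq[OF this] True show ?thesis unfolding P_H_def by simp
next
  case False
  have ev: "\<forall>\<^sub>F d in at_right 0. mk B (\<lambda>b. sqrt (lam b + d)) = P_pd Hs (outer x x + d *\<^sub>R mat 1)"
  proof -
    have "\<forall>\<^sub>F d in at_right (0::real). d > 0" by (simp add: eventually_at_right_less)
    thus ?thesis
    proof (rule eventually_mono)
      fix d :: real assume "d > 0"
      hence "\<forall>b\<in>B. lam b + d > 0" using lam_nonneg by (simp add: add_nonneg_pos)
      thus "mk B (\<lambda>b. sqrt (lam b + d)) = P_pd Hs (outer x x + d *\<^sub>R mat 1)" using P_pd_eq by simp
    qed
  qed
  have lim: "((\<lambda>d. mk B (\<lambda>b. sqrt (lam b + d))) \<longlongrightarrow> mk B (\<lambda>b. sqrt (lam b + 0))) (at_right 0)"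
    unfolding mk_def
    by (intro tendsto_sum tendsto_scaleR tendsto_const tendsto_real_sqrt tendsto_add tendsto_ident_at)
  have "((\<lambda>d. P_pd Hs (outer x x + d *\<^sub>R mat 1)) \<longlongrightarrow> mk B (\<lambda>b. sqrt (lam b))) (at_right 0)"
    using tendsto_cong[OF ev] lim by simp
  hence "Lim (at_right 0) (\<lambda>d. P_pd Hs (outer x x + d *\<^sub>R mat 1)) = mk B (\<lambda>b. sqrt (lam b))"
    by (intro tendsto_Lim) simp_all
  thus ?thesis unfolding P_H_def using False by simp
qed


lemma zero_Hs: "(0::real^'n^'n) \<in> Hs"
proof -
  have "0 *\<^sub>R mat 1 \<in> K" using algK alg_scale alg_one by blast
  thus ?thesis unfolding Hs_def psd_set_def by (simp add: transpose_def vec_eq_iff)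
qed

lemma Hs_psd: "Hs \<subseteq> psd_set" unfolding Hs_def by blast

lemma Hnorm_ge: "G \<in> Hs \<Longrightarrow> trace G \<le> 1 \<Longrightarrow> sqrt (y \<bullet> (G *v y)) \<le> H_norm Hs y"
  unfolding H_norm_def by (rule cSup_upper[OF _ H_norm_bdd[OF Hs_psd]]) blast

lemma Hnorm_le1: assumes "\<And>G. G \<in> Hs \<Longrightarrow> trace G \<le> 1 \<Longrightarrow> y \<bullet> (G *v y) \<le> 1" shows "H_norm Hs y \<le> 1"
  unfolding H_norm_def
proof (rule cSup_least)
  show "{sqrt (y \<bullet> (H *v y)) | H. H \<in> Hs \<and> trace H \<le> 1} \<noteq> {}"
    using zero_Hs by (auto simp: trace_def)
  fix z assume "z \<in> {sqrt (y \<bullet> (H *v y)) | H. H \<in> Hs \<and> trace H \<le> 1}"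
  then obtain G where "G \<in> Hs" "trace G \<le> 1" "z = sqrt (y \<bullet> (G *v y))" by blast
  thus "z \<le> 1" using assms by simp
qed

lemma B_ne: "B \<noteq> {}"
proof
  assume "B = {}"
  obtain i :: 'n where True by blast
  have "axis i (1::real) = 0" using onb_expand[OF onbB, of "axis i 1"] \<open>B = {}\<close> by simp
  thus False by simp
qed

lemma upper: assumes y: "H_norm Hs y \<le> 1" shows "x \<bullet> y \<le> (\<Sum>b\<in>B. sqrt (lam b))"
proof -
  define t where "t = (\<Sum>b\<in>B. sqrt (lam b))"
  define n where "n = real (card B)"
  have t0: "t \<ge> 0" unfolding t_def using lam_nonneg by (intro sum_nonneg) simp
  have n0: "n > 0" unfolding n_def using B_ne finB by (simp add: card_gt_0_iff)
  have key: "(x \<bullet> y)\<^sup>2 \<le> t * t + n * e * t" if e: "e > 0" for e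
  proof -
    define c where "c = t + n * e"
    have c0: "c > 0" unfolding c_def using t0 n0 e by (simp add: add_nonneg_pos)
    define g where "g s = (sqrt s + e) / c" for s
    let ?G = "mk B (\<lambda>b. g (lam b))"
    have gpos: "g (lam b) > 0" if "b \<in> B" for b
      unfolding g_def using c0 e lam_nonneg[OF that] by (simp add: add_nonneg_pos)
    have GKs: "?G \<in> Ks" by (rule mkKs)
    have "\<forall>b\<in>B. 0 \<le> g (lam b)" using gpos by (simp add: less_imp_le)
    hence Gpsd: "?G \<in> psd_set" unfolding psd_set_def
      using transpose_mk mk_psd[OF onbB, of "\<lambda>b. g (lam b)"] by auto
    have GHs: "?G \<in> Hs" using GKs Gpsd unfolding Hs_def Ks_def by auto
    have trG: "trace ?G = 1"
    proof -
      have "trace ?G = (\<Sum>b\<in>B. (sqrt (lam b) + e) / c)" unfolding trace_mk[OF onbB] g_def ..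
      also have "\<dots> = (\<Sum>b\<in>B. (sqrt (lam b) + e)) / c" by (simp add: sum_divide_distrib)
      also have "(\<Sum>b\<in>B. (sqrt (lam b) + e)) = c" unfolding c_def t_def n_def by (simp add: sum.distrib)
      finally show ?thesis using c0 by simp
    qed
    have "sqrt (y \<bullet> (?G *v y)) \<le> 1" using Hnorm_ge[OF GHs, of y] trG y by linarith
    hence q: "(\<Sum>b\<in>B. g (lam b) * (b \<bullet> y)\<^sup>2) \<le> 1" unfolding mk_quad[symmetric] by simp
    have xy: "x \<bullet> y = (\<Sum>b\<in>B. ((b \<bullet> x) / sqrt (g (lam b))) * (sqrt (g (lam b)) * (b \<bullet> y)))"
      unfolding onb_inner[OF onbB, of x y]
    proof (intro sum.cong refl)
      fix b assume b: "b \<in> B"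
      have s: "sqrt (g (lam b)) \<noteq> 0" using gpos[OF b] by simp
      show "(b \<bullet> x) * (b \<bullet> y) = ((b \<bullet> x) / sqrt (g (lam b))) * (sqrt (g (lam b)) * (b \<bullet> y))"
        using s by (simp add: field_simps)
    qed
    have "(x \<bullet> y)\<^sup>2 \<le> (\<Sum>b\<in>B. ((b \<bullet> x) / sqrt (g (lam b)))\<^sup>2) * (\<Sum>b\<in>B. (sqrt (g (lam b)) * (b \<bullet> y))\<^sup>2)"
      unfolding xy by (rule Cauchy_Schwarz_ineq_sum)
    moreover have "(\<Sum>b\<in>B. (sqrt (g (lam b)) * (b \<bullet> y))\<^sup>2) = (\<Sum>b\<in>B. g (lam b) * (b \<bullet> y)\<^sup>2)"
      using gpos by (intro sum.cong refl) (simp add: power_mult_distrib less_imp_le)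
    moreover have "(\<Sum>b\<in>B. ((b \<bullet> x) / sqrt (g (lam b)))\<^sup>2) = (\<Sum>b\<in>B. (c * (1 / (sqrt (lam b) + e))) * (b \<bullet> x)\<^sup>2)"
      using gpos by (intro sum.cong refl) (simp add: power_divide less_imp_le g_def)
    moreover have "\<dots> = c * (\<Sum>b\<in>B. (1 / (sqrt (lam b) + e)) * (b \<bullet> x)\<^sup>2)"
      by (simp add: sum_distrib_left mult.assoc)
    moreover have "(\<Sum>b\<in>B. (1 / (sqrt (lam b) + e)) * (b \<bullet> x)\<^sup>2) = (\<Sum>b\<in>B. lam b * (1 / (sqrt (lam b) + e)))"
      using I1[of "\<lambda>s. 1 / (sqrt s + e)"] by simp
    ultimately have xy2: "(x \<bullet> y)\<^sup>2 \<le> (c * (\<Sum>b\<in>B. lam b * (1 / (sqrt (lam b) + e)))) * (\<Sum>b\<in>B. g (lam b) * (b \<bullet> y)\<^sup>2)"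
      by simp
    have S1: "(\<Sum>b\<in>B. lam b * (1 / (sqrt (lam b) + e))) \<le> t" unfolding t_def
    proof (rule sum_mono)
      fix b assume b: "b \<in> B"
      have l0: "lam b \<ge> 0" using lam_nonneg[OF b] .
      have "lam b = sqrt (lam b) * sqrt (lam b)" using l0 by simp
      also have "\<dots> \<le> sqrt (lam b) * (sqrt (lam b) + e)" by (rule mult_left_mono) (use e l0 in auto)
      finally have "lam b \<le> sqrt (lam b) * (sqrt (lam b) + e)" .
      moreover have "sqrt (lam b) + e > 0" using e l0 by (simp add: add_nonneg_pos)
      ultimately show "lam b * (1 / (sqrt (lam b) + e)) \<le> sqrt (lam b)"
        by (simp add: divide_le_eq)
    qed
    have S10: "(\<Sum>b\<in>B. lam b * (1 / (sqrt (lam b) + e))) \<ge> 0"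
      using lam_nonneg e by (intro sum_nonneg) (simp add: add_nonneg_pos)
    have S20: "(\<Sum>b\<in>B. g (lam b) * (b \<bullet> y)\<^sup>2) \<ge> 0" using gpos by (intro sum_nonneg) (simp add: less_imp_le)
    have "(c * (\<Sum>b\<in>B. lam b * (1 / (sqrt (lam b) + e)))) * (\<Sum>b\<in>B. g (lam b) * (b \<bullet> y)\<^sup>2) \<le> (c * t) * 1"
      by (intro mult_mono mult_left_mono S1 q) (use c0 S10 S20 t0 in auto)
    with xy2 have "(x \<bullet> y)\<^sup>2 \<le> c * t" by simp
    thus ?thesis unfolding c_def by (simp add: algebra_simps)
  qed
  have sq: "(x \<bullet> y)\<^sup>2 \<le> t * t"
  proof (rule field_le_epsilon)
    fix \<epsilon> :: real assume eps: "\<epsilon> > 0"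
    define e where "e = \<epsilon> / (n * t + 1)"
    have nt: "n * t + 1 > 0" using n0 t0 by (simp add: add_nonneg_pos)
    have e0: "e > 0" unfolding e_def using eps nt by simp
    have "n * e * t = \<epsilon> * (n * t / (n * t + 1))" unfolding e_def by (simp add: field_simps)
    also have "\<dots> \<le> \<epsilon> * 1" using eps nt by (intro mult_left_mono) auto
    finally have "n * e * t \<le> \<epsilon>" by simp
    thus "(x \<bullet> y)\<^sup>2 \<le> t * t + \<epsilon>" using key[OF e0] by simp
  qed
  have "\<bar>x \<bullet> y\<bar> \<le> \<bar>t\<bar>" using sq by (simp add: abs_le_square_iff power2_eq_square)
  thus ?thesis using t0 unfolding t_def by simp
qed


lemma dual_eq: "H_dual_norm Hs x = (\<Sum>b\<in>B. sqrt (lam b))"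
proof -
  define r where "r s = (if s > 0 then 1 / sqrt s else 0)" for s :: real
  define R where "R = mk B (\<lambda>b. r (lam b))"
  define y0 where "y0 = R *v x"
  have RKs: "R \<in> Ks" unfolding R_def by (rule mkKs)
  have Rs: "transpose R = R" unfolding R_def by (rule transpose_mk)
  have xy0: "y0 \<bullet> x = (\<Sum>b\<in>B. sqrt (lam b))"
  proof -
    have "y0 \<bullet> x = x \<bullet> (R *v x)" unfolding y0_def by (simp add: inner_commute)
    also have "\<dots> = (\<Sum>b\<in>B. r (lam b) * (b \<bullet> x)\<^sup>2)" unfolding R_def by (rule mk_quad)
    also have "\<dots> = (\<Sum>b\<in>B. lam b * r (lam b))" using I1[of r] by simp
    also have "\<dots> = (\<Sum>b\<in>B. sqrt (lam b))"
    proof (intro sum.cong refl)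
      fix b assume b: "b \<in> B"
      show "lam b * r (lam b) = sqrt (lam b)"
      proof (cases "lam b > 0")
        case True thus ?thesis unfolding r_def by (simp add: real_div_sqrt)
      next
        case False thus ?thesis using lam_nonneg[OF b] unfolding r_def by simp
      qed
    qed
    finally show ?thesis .
  qed
  have RAR: "R ** A ** R = mk B (\<lambda>b. if lam b > 0 then 1 else 0)"
  proof -
    have "R ** A ** R = mk B (\<lambda>b. r (lam b) * lam b * r (lam b))"
      unfolding R_def Amk by (simp add: mk_mult[OF onbB])
    also have "\<dots> = mk B (\<lambda>b. if lam b > 0 then 1 else 0)"
      by (intro mk_cong) (simp add: r_def)
    finally show ?thesis .
  qed
  have y0n: "H_norm Hs y0 \<le> 1"
  proof (rule Hnorm_le1)
    fix G assume G: "G \<in> Hs" "trace G \<le> 1"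
    have GKs: "G \<in> Ks" and psd: "\<forall>v. 0 \<le> v \<bullet> (G *v v)" using Hs_Ks[OF G(1)] by auto
    have C: "R ** G ** R \<in> Ks" using algKs RKs GKs by (intro alg_mult) auto
    have "y0 \<bullet> (G *v y0) = x \<bullet> (R *v (G *v (R *v x)))" unfolding y0_def using sym_inner[OF Rs] by simp
    also have "\<dots> = x \<bullet> ((R ** G ** R) *v x)" by (simp only: matrix_vector_mul_assoc matrix_mul_assoc)
    also have "\<dots> = A \<bullet> (R ** G ** R)" using star C by simp
    also have "\<dots> = trace (A ** (R ** G ** R))" using frob_inner_eq[of A] unfolding frob_inner_def Asym by simp
    also have "\<dots> = trace (G ** (R ** A ** R))"
      by (metis matrix_mul_assoc trace_mul_sym)
    also have "\<dots> = (\<Sum>b\<in>B. b \<bullet> ((G ** (R ** A ** R)) *v b))" by (rule trace_onb[OF onbB])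
    also have "\<dots> = (\<Sum>b\<in>B. (if lam b > 0 then 1 else 0) * (b \<bullet> (G *v b)))"
      unfolding RAR
      by (intro sum.cong refl) (simp add: matrix_vector_mul_assoc[symmetric] mk_mulv_basis[OF onbB] matrix_vector_mult_scaleR)
    also have "\<dots> \<le> (\<Sum>b\<in>B. b \<bullet> (G *v b))"
      using psd by (intro sum_mono) auto
    also have "\<dots> = trace G" by (rule trace_onb[OF onbB, symmetric])
    finally show "y0 \<bullet> (G *v y0) \<le> 1" using G(2) by simp
  qed
  show ?thesis unfolding H_dual_norm_def
  proof (rule cSup_eq_maximum)
    show "(\<Sum>b\<in>B. sqrt (lam b)) \<in> {z \<bullet> x | z. H_norm Hs z \<le> 1}" using xy0 y0n by force
    fix w assume "w \<in> {z \<bullet> x | z. H_norm Hs z \<le> 1}"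
    then obtain z where "w = z \<bullet> x" "H_norm Hs z \<le> 1" by blast
    thus "w \<le> (\<Sum>b\<in>B. sqrt (lam b))" using upper[of z] by (simp add: inner_commute)
  qed
qed

end

theorem lemmaA8:
  fixes \<H> :: "('n::finite) sqmat set" and x :: "real^'n"
  assumes "well_structured \<H>"
  shows "H_dual_norm \<H> x = trace (P_H \<H> (outer x x))"
proof -
  obtain K where algK: "alg K" and Hdef: "\<H> = psd_set \<inter> K"
    using assms unfolding well_structured_def alg_def by blast
  define Ks where "Ks = {X. X \<in> K \<and> transpose X \<in> K}"
  have algKs: "alg Ks" unfolding Ks_def by (rule alg_sym[OF algK])
  have subKs: "subspace Ks"
    unfolding subspace_def
  proof (intro conjI ballI allI)
    have "0 *\<^sub>R mat 1 \<in> Ks" using algKs alg_scale alg_one by blast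
    thus "0 \<in> Ks" by simp
    fix u v assume "u \<in> Ks" "v \<in> Ks" thus "u + v \<in> Ks" using algKs alg_add by blast
  next
    fix c :: real and u assume "u \<in> Ks" thus "c *\<^sub>R u \<in> Ks" using algKs alg_scale by blast
  qed
  obtain A0 z where A0: "A0 \<in> span Ks" and zorth: "\<And>w. w \<in> span Ks \<Longrightarrow> orthogonal z w"
      and dec: "outer x x = A0 + z"
    using orthogonal_subspace_decomp_exists[of Ks "outer x x"] by blast
  have spKs: "span Ks = Ks" using subKs by simp
  have A0K: "A0 \<in> Ks" using A0 spKs by simp
  have A0T: "transpose A0 \<in> Ks" using A0K unfolding Ks_def by simp
  define A where "A = (1/2) *\<^sub>R (A0 + transpose A0)"
  have AKs: "A \<in> Ks" unfolding A_def using algKs A0K A0T by (intro alg_scale alg_add) auto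
  have Asym: "transpose A = A" unfolding A_def by (simp add: transpose_scalar transpose_add' add.commute)
  have A0C: "A0 \<bullet> C = x \<bullet> (C *v x)" if "C \<in> Ks" for C
  proof -
    have "z \<bullet> C = 0" using zorth[of C] that spKs unfolding orthogonal_def by simp
    hence "A0 \<bullet> C = outer x x \<bullet> C" unfolding dec by (simp add: inner_add_left)
    thus ?thesis by (simp add: outer_inner)
  qed
  have star: "\<forall>C\<in>Ks. A \<bullet> C = x \<bullet> (C *v x)"
  proof
    fix C assume C: "C \<in> Ks"
    have CT: "transpose C \<in> Ks" using C unfolding Ks_def by simp
    have "transpose A0 \<bullet> C = A0 \<bullet> transpose C" using inner_transpose[of A0 "transpose C"] by simp
    also have "\<dots> = x \<bullet> (transpose C *v x)" using A0C[OF CT] .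
    also have "\<dots> = x \<bullet> (C *v x)" by (simp add: dot_lmul_matrix[symmetric] inner_commute)
    finally have "transpose A0 \<bullet> C = x \<bullet> (C *v x)" .
    thus "A \<bullet> C = x \<bullet> (C *v x)" unfolding A_def using A0C[OF C] by (simp add: inner_add_left)
  qed
  obtain B lam where onbB: "onb B" and eig: "\<forall>b\<in>B. A *v b = lam b *\<^sub>R b"
    using spectral[OF Asym] by blast
  have "P_H \<H> (outer x x) = mk B (\<lambda>b. sqrt (lam b))"
    by (rule P_H_eq[OF algK Ks_def Hdef AKs Asym star onbB eig])
  moreover have "H_dual_norm \<H> x = (\<Sum>b\<in>B. sqrt (lam b))"
    by (rule dual_eq[OF algK Ks_def Hdef AKs Asym star onbB eig])
  ultimately show ?thesis using trace_mk[OF onbB] by simp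
qed

end
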